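(* Let $\gamma\in\mathbb N\setminus\{1\}$, $b_1<b_2<\dots<b_\gamma$ real numbers, and $a\in C(\mathbb R,\mathbb R)$ with $a(x)=x^\gamma$ for all $x\in\mathbb R$. Then (i) there exist unique $c_0,c_1,\dots,c_\gamma\in\mathbb R$ such that for all $k\in\{0,1,\dots,\gamma\}$, $\mathbb 1_{\{\gamma\}}(k)c_0+\sum_{i=1}^\gamma c_i(b_i)^k=\mathbb 1_{\{\gamma-1\}}(k)\gamma^{-1}$; (ii) with these constants, $\Psi=\mathbf A_{1,c_0}\bullet\bigl(\bigoplus_{i=1}^\gamma(c_i\circledast(\mathfrak i_1\bullet\mathbf A_{1,b_i}))\bigr)\in\mathbf N$ is well defined; (iii) $\mathcal D(\Psi)=(1,\gamma,1)$; (iv) $\mathcal R_a(\Psi)\in C(\mathbb R,\mathbb R)$; and (v) $(\mathcal R_a(\Psi))(x)=x$ for all $x\in\mathbb R$.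
   Context: Artificial neural networks (ANNs). Let $\mathbb N=\{1,2,\dots\}$ and $\mathbf N=\bigcup_{L\in\mathbb N}\bigcup_{l_0,\dots,l_L\in\mathbb N}\prod_{k=1}^L(\mathbb R^{l_k\times l_{k-1}}\times\mathbb R^{l_k})$. For $\Phi=((W_1,B_1),\dots,(W_L,B_L))$ in the $(l_0,\dots,l_L)$ component, $\mathcal L(\Phi)=L$, $\mathcal I(\Phi)=l_0$, $\mathcal O(\Phi)=l_L$, $\mathcal D(\Phi)=(l_0,\dots,l_L)$. For $a\in C(\mathbb R,\mathbb R)$ the realization is $(\mathcal R_a(\Phi))(x_0)=W_Lx_{L-1}+B_L$ with $x_k=\mathfrak M_{a,l_k}(W_kx_{k-1}+B_k)$, $k=1,\dots,L-1$, $\mathfrak M_{a,m}$ applying $a$ componentwise. $\operatorname I_n$ is the identity matrix; $\mathbf A_{W,B}=((W,B))$ (for reals $w,b$, $\mathbf A_{w,b}$ has $1\times1$ weight $w$ and bias $b$). Composition: for $\Phi_1=((W_1,B_1),\dots,(W_L,B_L))$, $\Phi_2=((\mathscr W_1,\mathscr B_1),\dots,(\mathscr W_{\mathfrak L},\mathscr B_{\mathfrak L}))$ with $\mathcal I(\Phi_1)=\mathcal O(\Phi_2)$, $\Phi_1\bullet\Phi_2=((\mathscr W_1,\mathscr B_1),\dots,(\mathscr W_{\mathfrak L-1},\mathscr B_{\mathfrak L-1}),(W_1\mathscr W_{\mathfrak L},W_1\mathscr B_{\mathfrak L}+B_1),(W_2,B_2),\dots,(W_L,B_L))$. $\lambda\circledast\Phi=\mathbf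 A_{\lambda\operatorname I_{\mathcal O(\Phi)},0}\bullet\Phi$. $\mathbf P_n(\Phi_1,\dots,\Phi_n)$ (equal lengths) has $k$-th layer $(\operatorname{diag}(W_{1,k},\dots,W_{n,k}),(B_{1,k},\dots,B_{n,k}))$. $\mathfrak S_{m,n}=\mathbf A_{(\operatorname I_m\cdots\operatorname I_m),0}$, $\mathfrak T_{m,n}=\mathbf A_{(\operatorname I_m\cdots\operatorname I_m)^\top,0}$ ($n$ blocks). For $\Phi_u,\dots,\Phi_v$ with equal $\mathcal L,\mathcal I,\mathcal O$: $\bigoplus_{k=u}^v\Phi_k=\mathfrak S_{\mathcal O(\Phi_u),v-u+1}\bullet([\mathbf P_{v-u+1}(\Phi_u,\dots,\Phi_v)]\bullet\mathfrak T_{\mathcal I(\Phi_u),v-u+1})$. $\mathfrak i_n=((\operatorname I_n,0),(\operatorname I_n,0))\in(\mathbb R^{n\times n}\times\mathbb R^n)^2$. *)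

theory Defs
  imports Complex_Main
begin

text \<open>Matrices are lists of rows (real list list), vectors are real lists.
  A layer is a pair (W, B); an ANN is a list of layers (first layer first).\<close>

type_synonym layer = "real list list \<times> real list"
type_synonym ann = "layer list"

definition ncols :: "real list list \<Rightarrow> nat" where
  "ncols M = (if M = [] then 0 else length (hd M))"

definition matvec :: "real list list \<Rightarrow> real list \<Rightarrow> real list" where
  "matvec W x = map (\<lambda>row. \<Sum>j<length x. row ! j * x ! j) W"

definition matmul :: "real list list \<Rightarrow> real list list \<Rightarrow> real list list" where
  "matmul A B = map (\<lambda>row. map (\<lambda>j. \<Sum>k<length B. row ! k * (B ! k) ! j) [0..<ncols B]) A"

definition vadd :: "real list \<Rightarrow> real list \<Rightarrow> real list" where
  "vadd x y = map2 (+) x y"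

definition idm :: "nat \<Rightarrow> real list list" where
  "idm n = map (\<lambda>i. map (\<lambda>j. if i = j then 1 else 0) [0..<n]) [0..<n]"

definition ann_dims :: "ann \<Rightarrow> nat list" where
  "ann_dims \<Phi> = ncols (fst (hd \<Phi>)) # map (\<lambda>l. length (snd l)) \<Phi>"

definition ann_L :: "ann \<Rightarrow> nat" where "ann_L \<Phi> = length \<Phi>"
definition ann_I :: "ann \<Rightarrow> nat" where "ann_I \<Phi> = hd (ann_dims \<Phi>)"
definition ann_O :: "ann \<Rightarrow> nat" where "ann_O \<Phi> = last (ann_dims \<Phi>)"

definition is_ANN :: "ann \<Rightarrow> bool" where
  "is_ANN \<Phi> \<longleftrightarrow> \<Phi> \<noteq> [] \<and> (\<forall>d\<in>set (ann_dims \<Phi>). d \<ge> 1) \<and>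
     (\<forall>k<length \<Phi>. length (fst (\<Phi> ! k)) = ann_dims \<Phi> ! (k+1) \<and>
        (\<forall>row\<in>set (fst (\<Phi> ! k)). length row = ann_dims \<Phi> ! k) \<and>
        length (snd (\<Phi> ! k)) = ann_dims \<Phi> ! (k+1))"

definition affine :: "layer \<Rightarrow> real list \<Rightarrow> real list" where
  "affine l x = vadd (matvec (fst l) x) (snd l)"

fun realize :: "(real \<Rightarrow> real) \<Rightarrow> ann \<Rightarrow> real list \<Rightarrow> real list" where
  "realize a [] x = x"
| "realize a [l] x = affine l x"
| "realize a (l # l' # ls) x = realize a (l' # ls) (map a (affine l x))"

definition annA :: "real list list \<Rightarrow> real list \<Rightarrow> ann" where
  "annA W B = [(W, B)]"

definition annA1 :: "real \<Rightarrow> real \<Rightarrow> ann" where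
  "annA1 w b = [([[w]], [b])]"

text \<open>Composition Phi1 \<bullet> Phi2 (Phi2 applied first).\<close>
definition comp :: "ann \<Rightarrow> ann \<Rightarrow> ann" where
  "comp \<Phi>1 \<Phi>2 =
     butlast \<Phi>2 @
     [(matmul (fst (hd \<Phi>1)) (fst (last \<Phi>2)),
       vadd (matvec (fst (hd \<Phi>1)) (snd (last \<Phi>2))) (snd (hd \<Phi>1)))] @ tl \<Phi>1"

definition smul :: "real \<Rightarrow> ann \<Rightarrow> ann" where
  "smul c \<Phi> = comp (annA (map (map (\<lambda>x. c * x)) (idm (ann_O \<Phi>))) (replicate (ann_O \<Phi>) 0)) \<Phi>"

fun blockdiag :: "real list list list \<Rightarrow> real list list" where
  "blockdiag [] = []"
| "blockdiag (M # Ms) =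
     map (\<lambda>r. r @ replicate (sum_list (map ncols Ms)) 0) M @
     map (\<lambda>r. replicate (ncols M) 0 @ r) (blockdiag Ms)"

text \<open>Parallelization P_n(Phi_1,...,Phi_n) (networks of equal length).\<close>
definition par :: "ann list \<Rightarrow> ann" where
  "par \<Phi>s = map (\<lambda>k. (blockdiag (map (\<lambda>\<Phi>. fst (\<Phi> ! k)) \<Phi>s), concat (map (\<lambda>\<Phi>. snd (\<Phi> ! k)) \<Phi>s)))
     [0..<length (hd \<Phi>s)]"

definition annS :: "nat \<Rightarrow> nat \<Rightarrow> ann" where
  "annS m n = annA (map (\<lambda>row. concat (replicate n row)) (idm m)) (replicate m 0)"

definition annT :: "nat \<Rightarrow> nat \<Rightarrow> ann" where
  "annT m n = annA (concat (replicate n (idm m))) (replicate (m * n) 0)"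

text \<open>Sum of networks Phi_u \<oplus> ... \<oplus> Phi_v, given as the list [Phi_u, ..., Phi_v].\<close>
definition annsum :: "ann list \<Rightarrow> ann" where
  "annsum \<Phi>s = comp (annS (ann_O (hd \<Phi>s)) (length \<Phi>s))
                 (comp (par \<Phi>s) (annT (ann_I (hd \<Phi>s)) (length \<Phi>s)))"

definition annid :: "nat \<Rightarrow> ann" where
  "annid n = [(idm n, replicate n 0), (idm n, replicate n 0)]"

end

theory Submission
  imports Defs "Jordan_Normal_Form.Determinant" "HOL-Computational_Algebra.Polynomial"
begin


lemma vander_inj:
  fixes \<beta> d :: "nat \<Rightarrow> real"
  assumes inj: "inj_on \<beta> {..<n}" and z: "\<forall>k<n. (\<Sum>i<n. d i * \<beta> i ^ k) = 0" and i0: "i0 < n"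
  shows "d i0 = 0"
proof -
  define p where "p = (\<Prod>j\<in>{..<n}-{i0}. [:-\<beta> j, 1:])"
  have "degree p \<le> (\<Sum>j\<in>{..<n}-{i0}. degree [:-\<beta> j, 1:])"
    unfolding p_def using degree_prod_sum_le[of "{..<n}-{i0}" "\<lambda>j. [:-\<beta> j, 1:]"] by (simp add: o_def)
  also have "\<dots> = n - 1" using i0 by simp
  finally have dp: "degree p < n" using i0 by linarith
  have "(\<Sum>i<n. d i * poly p (\<beta> i)) = (\<Sum>i<n. d i * (\<Sum>k\<le>degree p. coeff p k * \<beta> i ^ k))"
    by (simp add: poly_altdef)
  also have "\<dots> = (\<Sum>k\<le>degree p. coeff p k * (\<Sum>i<n. d i * \<beta> i ^ k))"
    by (simp add: sum_distrib_left sum_distrib_right mult_ac sum.swap[of _ "{..<n}"])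
  also have "\<dots> = 0" using z dp by simp
  finally have s0: "(\<Sum>i<n. d i * poly p (\<beta> i)) = 0" .
  have pv: "poly p x = (\<Prod>j\<in>{..<n}-{i0}. x - \<beta> j)" for x
    unfolding p_def by (simp add: poly_prod)
  have "(\<Sum>i<n. d i * poly p (\<beta> i)) = d i0 * poly p (\<beta> i0) + (\<Sum>i\<in>{..<n}-{i0}. d i * poly p (\<beta> i))"
    using i0 by (simp add: sum.remove)
  also have "(\<Sum>i\<in>{..<n}-{i0}. d i * poly p (\<beta> i)) = 0"
  proof (rule sum.neutral, rule ballI)
    fix i assume i: "i \<in> {..<n}-{i0}"
    have "poly p (\<beta> i) = 0" unfolding pv
      by (rule prod_zero) (use i in auto)
    then show "d i * poly p (\<beta> i) = 0" by simp
  qed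
  finally have "d i0 * poly p (\<beta> i0) = 0" using s0 by simp
  moreover have "poly p (\<beta> i0) \<noteq> 0" unfolding pv
    using inj i0 by (auto simp: inj_on_def)
  ultimately show ?thesis by simp
qed

lemma vander_solve:
  fixes \<beta> e :: "nat \<Rightarrow> real"
  assumes inj: "inj_on \<beta> {..<n}"
  shows "\<exists>v. \<forall>k<n. (\<Sum>i<n. v i * \<beta> i ^ k) = e k"
proof -
  define A :: "real mat" where "A = mat n n (\<lambda>(k,i). \<beta> i ^ k)"
  have A: "A \<in> carrier_mat n n" unfolding A_def by simp
  have Av: "(A *\<^sub>v v) $ k = (\<Sum>i<n. v $ i * \<beta> i ^ k)" if "k < n" "v \<in> carrier_vec n" for k v
    using that unfolding A_def
    by (auto simp: scalar_prod_def mult.commute lessThan_atLeast0 intro!: sum.cong)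
  have "det A \<noteq> 0"
  proof
    assume "det A = 0"
    then obtain v where v: "v \<in> carrier_vec n" "v \<noteq> 0\<^sub>v n" "A *\<^sub>v v = 0\<^sub>v n"
      using det_0_iff_vec_prod_zero_field[OF A] by auto
    have "\<forall>k<n. (\<Sum>i<n. (\<lambda>i. v $ i) i * \<beta> i ^ k) = 0"
    proof (intro allI impI)
      fix k assume k: "k < n"
      have "(A *\<^sub>v v) $ k = 0" using v k by simp
      thus "(\<Sum>i<n. (\<lambda>i. v $ i) i * \<beta> i ^ k) = 0" using Av[OF k v(1)] by simp
    qed
    hence "\<And>i. i < n \<Longrightarrow> v $ i = 0" using vander_inj[OF inj] by blast
    hence "v = 0\<^sub>v n" using v(1) by (intro eq_vecI) auto
    with v(2) show False by simp
  qed
  from det_non_zero_imp_unit[OF A this, of "()"]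
  obtain B where B: "B \<in> carrier_mat n n" and AB: "A * B = 1\<^sub>m n"
    unfolding Units_def ring_mat_def by auto
  define w where "w = B *\<^sub>v vec n e"
  have w: "w \<in> carrier_vec n" unfolding w_def using B by simp
  have "A *\<^sub>v w = (A * B) *\<^sub>v vec n e" unfolding w_def
    using A B by (simp add: assoc_mult_mat_vec)
  also have "\<dots> = vec n e" unfolding AB by simp
  finally have Aw: "A *\<^sub>v w = vec n e" .
  show ?thesis
  proof (intro exI allI impI)
    fix k assume k: "k < n"
    have "(A *\<^sub>v w) $ k = e k" using Aw k by simp
    thus "(\<Sum>i<n. (\<lambda>i. w $ i) i * \<beta> i ^ k) = e k" using Av[OF k w] by simp
  qed
qed


lemma L1: "comp (annid 1) (annA1 1 b) = [([[1]],[b]),([[1]],[0])]"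
  by (simp add: comp_def annid_def annA1_def matmul_def matvec_def vadd_def idm_def ncols_def)

lemma L2: "smul c [([[1]],[b]),([[1]],[0])] = [([[1]],[b]),([[c]],[0])]"
  by (simp add: smul_def comp_def annA_def ann_O_def ann_dims_def matmul_def matvec_def vadd_def idm_def ncols_def)

lemma diag: "blockdiag (map (\<lambda>x. [[x]]) xs) = map (\<lambda>i. map (\<lambda>j. if i = j then xs!i else 0) [0..<length xs]) [0..<length xs]"
proof (induction xs)
  case Nil then show ?case by simp
next
  case (Cons x xs)
  have nc: "sum_list (map (ncols \<circ> (\<lambda>x. [[x]])) xs) = length xs"
    by (induction xs) (auto simp: ncols_def)
  have nc3: "sum_list (replicate m (Suc 0)) = m" for m by (induction m) auto
  show ?case
    by (rule nth_equalityI) (auto simp: Cons nc nc3 o_def map_replicate_const ncols_def nth_append nth_Cons' upt_conv_Cons map_Suc_upt[symmetric] simp del: upt_Suc)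
qed


abbreviation diagm :: "real list \<Rightarrow> real list list" where
  "diagm xs \<equiv> blockdiag (map (\<lambda>x. [[x]]) xs)"

lemma concat_single: "concat (map (\<lambda>i. [f i]) xs) = map f xs"
  by (induction xs) auto

lemma concat_rep: "concat (replicate n [x]) = replicate n x"
  by (induction n) auto

lemma annT1: "annT 1 n = [(replicate n [1], replicate n 0)]"
  by (simp add: annT_def annA_def idm_def concat_rep)

lemma annS1: "annS 1 n = [([replicate n 1], [0])]"
  by (simp add: annS_def annA_def idm_def concat_rep)

lemma par_eq:
  assumes "is \<noteq> []"
  shows "par (map (\<lambda>i. [([[1]],[b i]),([[c i]],[0::real])]) is) =
    [(blockdiag (replicate (length is) [[1]]), map b is), (diagm (map c is), replicate (length is) 0)]"
proof -
  have h: "hd (map (\<lambda>i. [([[1]],[b i]),([[c i]],[0::real])]) is) = [([[1]],[b (hd is)]),([[c (hd is)]],[0])]"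
    using assms by (simp add: hd_map)
  have e: "[0..<2] = [0, 1::nat]" by (simp add: upt_rec)
  show ?thesis unfolding par_def h using assms
    by (simp add: e o_def concat_single map_replicate_const)
qed

lemma diag_len[simp]: "length (diagm xs) = length xs"
  by (simp add: diag)

lemma diag_nth: "i < length xs \<Longrightarrow> j < length xs \<Longrightarrow> diagm xs ! i ! j = (if i = j then xs ! i else 0)"
  by (simp add: diag)

lemma diag_row: "r \<in> set (diagm xs) \<Longrightarrow> length r = length xs"
  by (auto simp: diag)

lemma ncols_diag: "xs \<noteq> [] \<Longrightarrow> ncols (diagm xs) = length xs"
  by (auto simp: diag ncols_def hd_map)

lemma diagrep: "blockdiag (replicate n [[x]]) = map (\<lambda>i. map (\<lambda>j. if i=j then x else 0) [0..<n]) [0..<n]"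
  using diag[of "replicate n x"] by simp

lemma len_diagrep[simp]: "length (blockdiag (replicate n [[x]])) = n" by (simp add: diagrep)

lemma mm1: assumes "n \<ge> 1" shows "matmul (blockdiag (replicate n [[1]])) (replicate n [1]) = replicate n [1]"
proof (rule nth_equalityI)
  show "length (matmul (blockdiag (replicate n [[1]])) (replicate n [1])) = length (replicate n [1::real])"
    by (simp add: matmul_def diagrep)
next
  fix i assume i: "i < length (matmul (blockdiag (replicate n [[1]])) (replicate n [1]))"
  hence i': "i < n" by (simp add: matmul_def diagrep)
  have nc: "ncols (replicate n [1::real]) = 1" using assms by (cases n) (auto simp: ncols_def)
  have "(\<Sum>k<n. blockdiag (replicate n [[1]]) ! i ! k * replicate n [1] ! k ! 0) = (\<Sum>k<n. if i = k then 1 else (0::real))"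
    using i' by (intro sum.cong) (auto simp: diagrep)
  also have "\<dots> = 1" using i' by simp
  finally have s: "(\<Sum>k<n. blockdiag (replicate n [[1]]) ! i ! k * replicate n [1] ! k ! 0) = (1::real)" .
  have "matmul (blockdiag (replicate n [[1]])) (replicate n [1]) ! i = [\<Sum>k<n. blockdiag (replicate n [[1]]) ! i ! k * replicate n [1] ! k ! 0]"
    using i' unfolding matmul_def nc by simp
  then show "matmul (blockdiag (replicate n [[1]])) (replicate n [1]) ! i = replicate n [1] ! i"
    using i' s by simp
qed

lemma mv0: "matvec W (replicate n 0) = replicate (length W) 0"
  by (simp add: matvec_def map_replicate_const)

lemma vadd0: "length ys = n \<Longrightarrow> vadd (replicate n 0) ys = ys"
  by (induction ys arbitrary: n) (auto simp: vadd_def)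

lemma mm2: assumes "length cs \<ge> 1" shows "matmul [replicate (length cs) 1] (diagm cs) = [cs]"
proof -
  have "map (\<lambda>j. \<Sum>k<length cs. replicate (length cs) 1 ! k * diagm cs ! k ! j) [0..<length cs] = cs"
  proof (rule nth_equalityI)
    fix j assume "j < length (map (\<lambda>j. \<Sum>k<length cs. replicate (length cs) 1 ! k * diagm cs ! k ! j) [0..<length cs])"
    hence j: "j < length cs" by simp
    have "(\<Sum>k<length cs. replicate (length cs) (1::real) ! k * diagm cs ! k ! j) = (\<Sum>k<length cs. if k = j then cs ! j else 0)"
      using j by (intro sum.cong) (auto simp: diag_nth)
    also have "\<dots> = cs ! j" using j by simp
    finally show "map (\<lambda>j. \<Sum>k<length cs. replicate (length cs) 1 ! k * diagm cs ! k ! j) [0..<length cs] ! j = cs ! j"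
      using j by simp
  qed simp
  moreover have "cs \<noteq> []" using assms by auto
  ultimately show ?thesis by (simp add: matmul_def ncols_diag)
qed

lemma mm3: "matmul [[1]] [cs] = [cs]"
  by (simp add: matmul_def ncols_def map_nth)

lemma Psi_eq:
  fixes b c :: "nat \<Rightarrow> real"
  assumes ne: "is \<noteq> []"
  defines "\<Phi>s \<equiv> map (\<lambda>i. smul (c i) (comp (annid 1) (annA1 1 (b i)))) is"
  shows "\<Phi>s = map (\<lambda>i. [([[1]],[b i]),([[c i]],[0])]) is"
    and "annsum \<Phi>s = [(replicate (length is) [1], map b is), ([map c is], [0])]"
    and "comp (annA1 1 dd) (annsum \<Phi>s) = [(replicate (length is) [1], map b is), ([map c is], [dd])]"
proof -
  let ?n = "length is"
  have n: "?n \<ge> 1" using ne by (cases "is") auto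
  show 1: "\<Phi>s = map (\<lambda>i. [([[1]],[b i]),([[c i]],[0])]) is"
    unfolding \<Phi>s_def L1 L2 by simp
  have h: "hd \<Phi>s = [([[1]],[b (hd is)]),([[c (hd is)]],[0])]" using ne unfolding 1 by (simp add: hd_map)
  have O: "ann_O (hd \<Phi>s) = 1" "ann_I (hd \<Phi>s) = 1" unfolding h by (simp_all add: ann_O_def ann_I_def ann_dims_def ncols_def)
  have len: "length \<Phi>s = ?n" unfolding 1 by simp
  have inner: "comp (par \<Phi>s) (annT 1 ?n) = [(replicate ?n [1], map b is), (diagm (map c is), replicate ?n 0)]"
    unfolding 1 par_eq[OF ne] annT1 comp_def using n by (simp add: mm1 mv0 vadd0)
  have lc: "length (map c is) = ?n" by simp
  have "annsum \<Phi>s = comp (annS 1 ?n) (comp (par \<Phi>s) (annT 1 ?n))"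
    unfolding annsum_def O len ..
  also have "\<dots> = comp [([replicate ?n 1], [0])] [(replicate ?n [1], map b is), (diagm (map c is), replicate ?n 0)]"
    unfolding inner annS1 ..
  also have "\<dots> = [(replicate ?n [1], map b is), ([map c is], [0])]"
    unfolding comp_def using mm2[of "map c is"] n by (simp add: mv0 vadd_def)
  finally show 2: "annsum \<Phi>s = [(replicate ?n [1], map b is), ([map c is], [0])]" .
  show "comp (annA1 1 dd) (annsum \<Phi>s) = [(replicate ?n [1], map b is), ([map c is], [dd])]"
    unfolding 2 comp_def annA1_def by (simp add: mm3 matvec_def vadd_def)
qed

theorem mainTheorem9:
  fixes \<gamma> :: nat and b :: "nat \<Rightarrow> real" and a :: "real \<Rightarrow> real"
  assumes "\<gamma> \<ge> 1" and "\<gamma> \<noteq> 1"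
    and "\<And>i j. 1 \<le> i \<Longrightarrow> i < j \<Longrightarrow> j \<le> \<gamma> \<Longrightarrow> b i < b j"
    and "\<And>x. a x = x ^ \<gamma>"
  shows "(\<exists>!c :: nat \<Rightarrow> real. (\<forall>i>\<gamma>. c i = 0) \<and>
            (\<forall>k\<le>\<gamma>. (if k = \<gamma> then c 0 else 0) + (\<Sum>i=1..\<gamma>. c i * b i ^ k)
                     = (if k = \<gamma> - 1 then 1 / real \<gamma> else 0)))
       \<and> (\<forall>c :: nat \<Rightarrow> real.
            (\<forall>k\<le>\<gamma>. (if k = \<gamma> then c 0 else 0) + (\<Sum>i=1..\<gamma>. c i * b i ^ k)
                     = (if k = \<gamma> - 1 then 1 / real \<gamma> else 0)) \<longrightarrow>
            (let \<Phi>s = map (\<lambda>i. smul (c i) (comp (annid 1) (annA1 1 (b i)))) [1..<\<gamma>+1];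
                 \<Psi> = comp (annA1 1 (c 0)) (annsum \<Phi>s)
             in (\<forall>\<Phi>\<in>set \<Phi>s. is_ANN \<Phi> \<and> ann_dims \<Phi> = ann_dims (hd \<Phi>s))
                \<and> is_ANN (annsum \<Phi>s) \<and> ann_O (annsum \<Phi>s) = ann_I (annA1 1 (c 0))
                \<and> is_ANN \<Psi>
                \<and> ann_dims \<Psi> = [1, \<gamma>, 1]
                \<and> continuous_on UNIV (\<lambda>x. hd (realize a \<Psi> [x]))
                \<and> (\<forall>x. realize a \<Psi> [x] = [x])))"

proof -
  let ?rhs = "\<lambda>k. if k = \<gamma> - 1 then 1 / real \<gamma> else (0::real)"
  have g1: "\<gamma> \<ge> 1" using assms(1) .
  have reidx: "\<And>f::nat\<Rightarrow>real. (\<Sum>i=1..\<gamma>. f i) = (\<Sum>i<\<gamma>. f (Suc i))"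
    by (metis sum_bounds_lt_plus1)
  have inj: "inj_on (\<lambda>i. b (Suc i)) {..<\<gamma>}"
  proof (rule inj_onI)
    fix i j assume "i \<in> {..<\<gamma>}" "j \<in> {..<\<gamma>}" "b (Suc i) = b (Suc j)"
    then show "i = j" using assms(3)[of "Suc i" "Suc j"] assms(3)[of "Suc j" "Suc i"]
      by (cases i j rule: linorder_cases) auto
  qed
  have gne: "\<gamma> \<noteq> \<gamma> - 1" using g1 by simp
  have part1: "\<exists>!c :: nat \<Rightarrow> real. (\<forall>i>\<gamma>. c i = 0) \<and>
            (\<forall>k\<le>\<gamma>. (if k = \<gamma> then c 0 else 0) + (\<Sum>i=1..\<gamma>. c i * b i ^ k) = ?rhs k)"
  proof -
    obtain v where v: "\<forall>k<\<gamma>. (\<Sum>i<\<gamma>. v i * b (Suc i) ^ k) = ?rhs k"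
      using vander_solve[OF inj, of ?rhs] by blast
    define c where "c i = (if i = 0 then - (\<Sum>j<\<gamma>. v j * b (Suc j) ^ \<gamma>) else if i \<le> \<gamma> then v (i - 1) else 0)" for i
    have S: "(\<Sum>i=1..\<gamma>. c i * b i ^ k) = (\<Sum>i<\<gamma>. v i * b (Suc i) ^ k)" for k
      unfolding reidx by (intro sum.cong) (auto simp: c_def)
    show ?thesis
    proof (rule ex1I[of _ c], intro conjI allI impI)
      fix i assume "\<gamma> < i" then show "c i = 0" by (simp add: c_def)
    next
      fix k assume k: "k \<le> \<gamma>"
      show "(if k = \<gamma> then c 0 else 0) + (\<Sum>i=1..\<gamma>. c i * b i ^ k) = ?rhs k"
      proof (cases "k = \<gamma>")
        case True
        have c0: "c 0 = - (\<Sum>j<\<gamma>. v j * b (Suc j) ^ \<gamma>)" by (simp add: c_def)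
        show ?thesis using True gne S[of \<gamma>] c0 by simp
      next
        case False then show ?thesis using v k S[of k] by simp
      qed
    next
      fix c' :: "nat \<Rightarrow> real"
      assume c': "(\<forall>i>\<gamma>. c' i = 0) \<and> (\<forall>k\<le>\<gamma>. (if k = \<gamma> then c' 0 else 0) + (\<Sum>i=1..\<gamma>. c' i * b i ^ k) = ?rhs k)"
      have d0: "\<forall>k<\<gamma>. (\<Sum>i<\<gamma>. (c' (Suc i) - v i) * b (Suc i) ^ k) = 0"
      proof (intro allI impI)
        fix k assume k: "k < \<gamma>"
        have "(\<Sum>i=1..\<gamma>. c' i * b i ^ k) = ?rhs k" using c' k by (auto dest: spec[of _ k])
        hence "(\<Sum>i<\<gamma>. c' (Suc i) * b (Suc i) ^ k) = ?rhs k" unfolding reidx .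
        moreover have "(\<Sum>i<\<gamma>. v i * b (Suc i) ^ k) = ?rhs k" using v k by blast
        ultimately show "(\<Sum>i<\<gamma>. (c' (Suc i) - v i) * b (Suc i) ^ k) = 0"
          by (simp add: left_diff_distrib sum_subtractf)
      qed
      have eqi: "c' (Suc i) = v i" if "i < \<gamma>" for i
        using vander_inj[OF inj d0 that] by simp
      have "(\<Sum>i=1..\<gamma>. c' i * b i ^ \<gamma>) = (\<Sum>i<\<gamma>. v i * b (Suc i) ^ \<gamma>)"
        unfolding reidx by (intro sum.cong) (auto simp: eqi)
      moreover have "c' 0 + (\<Sum>i=1..\<gamma>. c' i * b i ^ \<gamma>) = 0"
        using c' gne by (auto dest: spec[of _ \<gamma>])
      ultimately have "c' 0 = c 0" by (simp add: c_def)
      show "c' = c"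
      proof
        fix i show "c' i = c i"
        proof (cases "i = 0")
          case True with \<open>c' 0 = c 0\<close> show ?thesis by simp
        next
          case False
          show ?thesis
          proof (cases "i \<le> \<gamma>")
            case True
            with False eqi[of "i - 1"] show ?thesis by (simp add: c_def)
          next
            case F2: False
            with c' show ?thesis by (simp add: c_def)
          qed
        qed
      qed
    qed
  qed
  have part2: "\<forall>c :: nat \<Rightarrow> real.
            (\<forall>k\<le>\<gamma>. (if k = \<gamma> then c 0 else 0) + (\<Sum>i=1..\<gamma>. c i * b i ^ k) = ?rhs k) \<longrightarrow>
            (let \<Phi>s = map (\<lambda>i. smul (c i) (comp (annid 1) (annA1 1 (b i)))) [1..<\<gamma>+1];
                 \<Psi> = comp (annA1 1 (c 0)) (annsum \<Phi>s)
             in (\<forall>\<Phi>\<in>set \<Phi>s. is_ANN \<Phi> \<and> ann_dims \<Phi> = ann_dims (hd \<Phi>s))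
                \<and> is_ANN (annsum \<Phi>s) \<and> ann_O (annsum \<Phi>s) = ann_I (annA1 1 (c 0))
                \<and> is_ANN \<Psi>
                \<and> ann_dims \<Psi> = [1, \<gamma>, 1]
                \<and> continuous_on UNIV (\<lambda>x. hd (realize a \<Psi> [x]))
                \<and> (\<forall>x. realize a \<Psi> [x] = [x]))"
  proof (intro allI impI)
    fix c :: "nat \<Rightarrow> real"
    assume hc: "\<forall>k\<le>\<gamma>. (if k = \<gamma> then c 0 else 0) + (\<Sum>i=1..\<gamma>. c i * b i ^ k) = ?rhs k"
    define idx where "idx = [1..<\<gamma>+1]"
    have ne: "idx \<noteq> []" and li: "length idx = \<gamma>" using g1 by (auto simp: idx_def)
    define \<Phi>s where "\<Phi>s = map (\<lambda>i. smul (c i) (comp (annid 1) (annA1 1 (b i)))) idx"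
    note P1 = Psi_eq(1)[OF ne, where b=b and c=c, folded \<Phi>s_def]
    note P2 = Psi_eq(2)[OF ne, where b=b and c=c, folded \<Phi>s_def, unfolded li]
    note P3 = Psi_eq(3)[OF ne, where b=b and c=c and dd="c 0", folded \<Phi>s_def, unfolded li]
    have R: "realize a (comp (annA1 1 (c 0)) (annsum \<Phi>s)) [x] = [x]" for x
    proof -
      have m1: "matvec (replicate \<gamma> [1]) [x] = replicate \<gamma> x"
        by (simp add: matvec_def map_replicate_const)
      have va: "vadd (replicate (length ys) x) ys = map (\<lambda>y. x + y) ys" for ys :: "real list"
        by (induction ys) (auto simp: vadd_def)
      have "realize a (comp (annA1 1 (c 0)) (annsum \<Phi>s)) [x]
          = affine ([map c idx], [c 0]) (map a (affine (replicate \<gamma> [1], map b idx) [x]))"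
        unfolding P3 by simp
      also have "affine (replicate \<gamma> [1], map b idx) [x] = map (\<lambda>i. x + b i) idx"
        unfolding affine_def using m1 va[of "map b idx"] li by simp
      also have "affine ([map c idx], [c 0]) (map a (map (\<lambda>i. x + b i) idx))
          = [(\<Sum>j<\<gamma>. c (idx ! j) * (x + b (idx ! j)) ^ \<gamma>) + c 0]"
        unfolding affine_def matvec_def vadd_def using li by (simp add: assms(4))
      also have "(\<Sum>j<\<gamma>. c (idx ! j) * (x + b (idx ! j)) ^ \<gamma>) = (\<Sum>i=1..\<gamma>. c i * (b i + x) ^ \<gamma>)"
        unfolding reidx idx_def by (intro sum.cong) (auto simp: add.commute nth_upt simp del: upt_Suc)
      also have "\<dots> = (\<Sum>k\<le>\<gamma>. of_nat (\<gamma> choose k) * x ^ (\<gamma> - k) * (\<Sum>i=1..\<gamma>. c i * b i ^ k))"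
        by (simp add: binomial_ring sum_distrib_left sum_distrib_right mult_ac, rule sum.swap)
      also have "\<dots> = (\<Sum>k<\<gamma>. of_nat (\<gamma> choose k) * x ^ (\<gamma> - k) * ?rhs k) - c 0"
      proof -
        have "(\<Sum>k\<le>\<gamma>. of_nat (\<gamma> choose k) * x ^ (\<gamma> - k) * (\<Sum>i=1..\<gamma>. c i * b i ^ k))
           = (\<Sum>k<\<gamma>. of_nat (\<gamma> choose k) * x ^ (\<gamma> - k) * (\<Sum>i=1..\<gamma>. c i * b i ^ k))
             + (\<Sum>i=1..\<gamma>. c i * b i ^ \<gamma>)"
          by (simp add: lessThan_Suc_atMost[symmetric])
        also have "(\<Sum>k<\<gamma>. of_nat (\<gamma> choose k) * x ^ (\<gamma> - k) * (\<Sum>i=1..\<gamma>. c i * b i ^ k))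
           = (\<Sum>k<\<gamma>. of_nat (\<gamma> choose k) * x ^ (\<gamma> - k) * ?rhs k)"
        proof (intro sum.cong refl)
          fix k assume "k \<in> {..<\<gamma>}"
          then have "(\<Sum>i=1..\<gamma>. c i * b i ^ k) = ?rhs k" using hc by (auto dest: spec[of _ k])
          then show "of_nat (\<gamma> choose k) * x ^ (\<gamma> - k) * (\<Sum>i=1..\<gamma>. c i * b i ^ k)
             = of_nat (\<gamma> choose k) * x ^ (\<gamma> - k) * ?rhs k" by simp
        qed
        also have "(\<Sum>i=1..\<gamma>. c i * b i ^ \<gamma>) = - c 0"
          using hc gne by (auto dest: spec[of _ \<gamma>])
        finally show ?thesis by simp
      qed
      also have "(\<Sum>k<\<gamma>. of_nat (\<gamma> choose k) * x ^ (\<gamma> - k) * ?rhs k)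
          = (\<Sum>k<\<gamma>. if k = \<gamma> - 1 then of_nat (\<gamma> choose (\<gamma> - 1)) * x ^ (\<gamma> - (\<gamma> - 1)) * (1 / real \<gamma>) else 0)"
        by (intro sum.cong) auto
      also have "\<dots> = of_nat (\<gamma> choose (\<gamma> - 1)) * x ^ (\<gamma> - (\<gamma> - 1)) * (1 / real \<gamma>)"
        using g1 by (simp add: sum.delta)
      also have "\<dots> = x"
      proof -
        have "\<gamma> choose (\<gamma> - 1) = \<gamma>" using g1 by (cases \<gamma>) (auto simp: binomial_Suc_n)
        moreover have "\<gamma> - (\<gamma> - 1) = 1" using g1 by simp
        ultimately show ?thesis using g1 by simp
      qed
      finally show ?thesis by simp
    qed
    have net: "is_ANN [(replicate n [1], bs), ([cs], [d])] \<and> ann_dims [(replicate n [1], bs), ([cs], [d])] = [1, n, 1]"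
      if "n \<ge> 1" "length bs = n" "length cs = n" for n bs cs and d :: real
    proof -
      have nc: "ncols (replicate n [1::real]) = 1" using that(1) by (cases n) (auto simp: ncols_def)
      have dims: "ann_dims [(replicate n [1], bs), ([cs], [d])] = [1, n, 1]"
        unfolding ann_dims_def using nc that by simp
      have k2: "\<And>k. k < length [(replicate n [1::real], bs), ([cs], [d])] \<Longrightarrow> k = 0 \<or> k = 1" by auto
      show ?thesis unfolding is_ANN_def dims using that
        by (auto simp: less_Suc_eq nth_Cons')
    qed
    have Phi_i: "\<forall>\<Phi>\<in>set \<Phi>s. is_ANN \<Phi> \<and> ann_dims \<Phi> = [1,1,1]"
      using net[of 1 "[b i]" "[c i]" 0 for i] unfolding P1 by auto
    have Pne: "\<Phi>s \<noteq> []" using ne by (simp add: \<Phi>s_def)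
    have hdd: "ann_dims (hd \<Phi>s) = [1,1,1]" using Phi_i hd_in_set[OF Pne] by blast
    have A: "is_ANN (annsum \<Phi>s) \<and> ann_dims (annsum \<Phi>s) = [1, \<gamma>, 1]"
      unfolding P2 using net[of \<gamma> "map b idx" "map c idx" 0] g1 li by simp
    have B: "is_ANN (comp (annA1 1 (c 0)) (annsum \<Phi>s)) \<and> ann_dims (comp (annA1 1 (c 0)) (annsum \<Phi>s)) = [1, \<gamma>, 1]"
      unfolding P3 using net[of \<gamma> "map b idx" "map c idx" "c 0"] g1 li by simp
    have O: "ann_O (annsum \<Phi>s) = ann_I (annA1 1 (c 0))"
      using A by (simp add: ann_O_def ann_I_def ann_dims_def annA1_def ncols_def)
    have C: "continuous_on UNIV (\<lambda>x. hd (realize a (comp (annA1 1 (c 0)) (annsum \<Phi>s)) [x]))"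
      by (simp add: R continuous_on_id)
    show "let \<Phi>s = map (\<lambda>i. smul (c i) (comp (annid 1) (annA1 1 (b i)))) [1..<\<gamma>+1];
                 \<Psi> = comp (annA1 1 (c 0)) (annsum \<Phi>s)
             in (\<forall>\<Phi>\<in>set \<Phi>s. is_ANN \<Phi> \<and> ann_dims \<Phi> = ann_dims (hd \<Phi>s))
                \<and> is_ANN (annsum \<Phi>s) \<and> ann_O (annsum \<Phi>s) = ann_I (annA1 1 (c 0))
                \<and> is_ANN \<Psi>
                \<and> ann_dims \<Psi> = [1, \<gamma>, 1]
                \<and> continuous_on UNIV (\<lambda>x. hd (realize a \<Psi> [x]))
                \<and> (\<forall>x. realize a \<Psi> [x] = [x])"
      unfolding Let_def \<Phi>s_def[unfolded idx_def, symmetric] using Phi_i hdd A B O C R by simp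
  qed
  show ?thesis using part1 part2 by blast
qed

end
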